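(* Fix the parameters $S_1,\dots,S_{\mathcal K}$, $\lambda_1,\dots,\lambda_{\mathcal K}$ of the storage model in the context. Suppose that the linear system \[ \sum_{j=1}^{\kappa_i}\alpha_{ij}=\lambda_i\ (i=1,\dots,\mathcal K),\qquad \sum_{i=1}^{\mathcal K}\sum_{j=1}^{\kappa_i}\alpha_{ij}\,\delta_{\ell,s^i_j}=\tfrac1n\ (\ell=1,\dots,n) \] has no positive solution $(\alpha_{ij})$ (i.e. no solution with all $\alpha_{ij}>0$). Then for any routing policy $P$, the shape process $\tilde X(t)$ with routing policy $P$ is not positive recurrent.
   Context: Storage model: there are $n$ nodes $\{1,\dots,n\}$ and $\mathcal K\ge1$ non-empty neighborhoods $S_1,\dots,S_{\mathcal K}\subset\{1,\dots,n\}$ with $\bigcup_i S_i=\{1,\dots,n\}$; $\kappa_i=|S_i|$ and $S_i=\{s^i_1,\dots,s^i_{\kappa_i}\}$. Items arrive at $S_i$ as independent Poisson processes with rates $\lambda_i>0$, $\sum_{i=1}^{\mathcal K}\lambda_i=1$. Let $\Lambda_i=\{p\in\mathbb R^{\kappa_i}:p_j\ge0,\sum_j p_j=1\}$. A routing policy is a map $P:\mathbb N^n\to\Lambda_1\times\dots\times\Lambda_{\mathcal K}$ with $P(x+c\mathbf 1)=P(x)$ for all integers $c$; an item arriving at $S_i$ when the configuration is $x$ is stored at node $s^i_j$ with probability $p^{(i)}_j(x)$, independently for each arrival (the policy need not be local). $X(t)$ is the vector of node loads, $M(t)=\frac1n\sum_iX_i(t)$, the shape is $\tilde X(t)=X(t)-M(t)\mathbf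 1$, and $\tilde X^e(m)$ is the shape observed at successive arrival moments. With $\tau=\inf\{m>0:\tilde X^e(m)=0\}$, the process is positive recurrent if $\mathbf E(\tau\mid\tilde X^e(0)=x)<\infty$ for every state $x$. $\delta_{\ell,m}$ is the Kronecker delta. *)

theory Defs
  imports "HOL-Analysis.Analysis"
begin

text \<open>Nodes are 1..n, neighborhoods are indexed by i in 1..K,
  neighborhood S_i is enumerated as s i 1, ..., s i (kappa i).
  A configuration (vector of node loads in N^n) is a function nat => nat
  vanishing outside {1..n}.  A routing policy is p x i j = p^(i)_j(x).\<close>

definition configs :: "nat \<Rightarrow> (nat \<Rightarrow> nat) set" where
  "configs n = {x. \<forall>l. l \<notin> {1..n} \<longrightarrow> x l = 0}"

definition nbhd :: "(nat \<Rightarrow> nat \<Rightarrow> nat) \<Rightarrow> nat \<Rightarrow> nat \<Rightarrow> nat set" where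
  "nbhd s kappa i = s i ` {1..kappa}"

definition storage_model ::
  "nat \<Rightarrow> nat \<Rightarrow> (nat \<Rightarrow> nat) \<Rightarrow> (nat \<Rightarrow> nat \<Rightarrow> nat) \<Rightarrow> (nat \<Rightarrow> real) \<Rightarrow> bool" where
  "storage_model n K kappa s lam \<longleftrightarrow>
     K \<ge> 1 \<and>
     (\<forall>i\<in>{1..K}. kappa i \<ge> 1 \<and> inj_on (s i) {1..kappa i} \<and> s i ` {1..kappa i} \<subseteq> {1..n}) \<and>
     (\<Union>i\<in>{1..K}. nbhd s (kappa i) i) = {1..n} \<and>
     (\<forall>i\<in>{1..K}. lam i > 0) \<and> (\<Sum>i=1..K. lam i) = 1"

definition routing_policy ::
  "nat \<Rightarrow> nat \<Rightarrow> (nat \<Rightarrow> nat) \<Rightarrow> ((nat \<Rightarrow> nat) \<Rightarrow> nat \<Rightarrow> nat \<Rightarrow> real) \<Rightarrow> bool" where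
  "routing_policy n K kappa p \<longleftrightarrow>
     (\<forall>x\<in>configs n. \<forall>i\<in>{1..K}.
        (\<forall>j\<in>{1..kappa i}. p x i j \<ge> 0) \<and> (\<Sum>j=1..kappa i. p x i j) = 1) \<and>
     (\<forall>x\<in>configs n. \<forall>c::nat. \<forall>i\<in>{1..K}. \<forall>j\<in>{1..kappa i}.
        p (\<lambda>l. if l \<in> {1..n} then x l + c else 0) i j = p x i j)"

definition load_mean :: "nat \<Rightarrow> (nat \<Rightarrow> nat) \<Rightarrow> real" where
  "load_mean n x = (\<Sum>l=1..n. real (x l)) / real n"

definition shape :: "nat \<Rightarrow> (nat \<Rightarrow> nat) \<Rightarrow> nat \<Rightarrow> real" where
  "shape n x = (\<lambda>l. if l \<in> {1..n} then real (x l) - load_mean n x else 0)"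

definition add_item :: "(nat \<Rightarrow> nat) \<Rightarrow> nat \<Rightarrow> (nat \<Rightarrow> nat)" where
  "add_item x l = x(l := Suc (x l))"

text \<open>survival ... m x = Pr(tau > m | X^e(0) = x) for the embedded chain at arrival moments:
  at each arrival the neighborhood is i with probability lam i (Poisson rates summing to 1),
  the item is stored at s i j with probability p x i j.
  tau = inf {m > 0. shape after the m-th arrival = 0}.\<close>
primrec survival ::
  "nat \<Rightarrow> nat \<Rightarrow> (nat \<Rightarrow> nat) \<Rightarrow> (nat \<Rightarrow> nat \<Rightarrow> nat) \<Rightarrow> (nat \<Rightarrow> real) \<Rightarrow>
   ((nat \<Rightarrow> nat) \<Rightarrow> nat \<Rightarrow> nat \<Rightarrow> real) \<Rightarrow> nat \<Rightarrow> (nat \<Rightarrow> nat) \<Rightarrow> real" where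
  "survival n K kappa s lam p 0 x = 1"
| "survival n K kappa s lam p (Suc m) x =
     (\<Sum>i=1..K. \<Sum>j=1..kappa i. lam i * p x i j *
        (let y = add_item x (s i j) in
         if shape n y = (\<lambda>_. 0) then 0 else survival n K kappa s lam p m y))"

text \<open>E(tau | X^e(0) = x) = sum over m \<ge> 0 of Pr(tau > m) (possibly infinite).\<close>
definition expected_return_time ::
  "nat \<Rightarrow> nat \<Rightarrow> (nat \<Rightarrow> nat) \<Rightarrow> (nat \<Rightarrow> nat \<Rightarrow> nat) \<Rightarrow> (nat \<Rightarrow> real) \<Rightarrow>
   ((nat \<Rightarrow> nat) \<Rightarrow> nat \<Rightarrow> nat \<Rightarrow> real) \<Rightarrow> (nat \<Rightarrow> nat) \<Rightarrow> ennreal" where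
  "expected_return_time n K kappa s lam p x =
     (\<Sum>m. ennreal (survival n K kappa s lam p m x))"

definition positive_recurrent ::
  "nat \<Rightarrow> nat \<Rightarrow> (nat \<Rightarrow> nat) \<Rightarrow> (nat \<Rightarrow> nat \<Rightarrow> nat) \<Rightarrow> (nat \<Rightarrow> real) \<Rightarrow>
   ((nat \<Rightarrow> nat) \<Rightarrow> nat \<Rightarrow> nat \<Rightarrow> real) \<Rightarrow> bool" where
  "positive_recurrent n K kappa s lam p \<longleftrightarrow>
     (\<forall>x\<in>configs n. expected_return_time n K kappa s lam p x < \<infinity>)"

end

theory Submission
  imports Defs
begin

definition ip :: "'c set \<Rightarrow> ('c \<Rightarrow> real) \<Rightarrow> ('c \<Rightarrow> real) \<Rightarrow> real" where
  "ip D y a = (\<Sum>c\<in>D. y c * a c)"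

lemma ip_lin_right: "ip D y (\<lambda>c. \<alpha> * a c - \<beta> * d c) = \<alpha> * ip D y a - \<beta> * ip D y d"
  unfolding ip_def by (simp add: sum_subtractf sum_distrib_left algebra_simps)

lemma ip_lin_left: "ip D (\<lambda>c. \<alpha> * z c - \<beta> * y c) a = \<alpha> * ip D z a - \<beta> * ip D y a"
  unfolding ip_def by (simp add: sum_subtractf sum_distrib_left algebra_simps)

lemma farkas:
  fixes E :: "'e set" and D :: "'c set" and as :: "'e \<Rightarrow> 'c \<Rightarrow> real"
  assumes "finite E" "finite D"
  shows "(\<exists>\<mu>. (\<forall>e\<in>E. \<mu> e \<ge> 0) \<and> (\<forall>c\<in>D. b c = (\<Sum>e\<in>E. \<mu> e * as e c)))
      \<or> (\<exists>y. (\<forall>e\<in>E. ip D y (as e) \<ge> 0) \<and> ip D y b < 0)"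
  using assms(1)
proof (induction E arbitrary: as b rule: finite_induct)
  case empty
  show ?case
  proof (cases "\<forall>c\<in>D. b c = 0")
    case True then show ?thesis by simp
  next
    case False
    then obtain c0 where c0: "c0 \<in> D" "b c0 \<noteq> 0" by blast
    have "ip D (\<lambda>c. - b c) b = - (\<Sum>c\<in>D. (b c)^2)"
      unfolding ip_def by (simp add: power2_eq_square sum_negf)
    moreover have "(\<Sum>c\<in>D. (b c)^2) > 0"
    proof -
      have "(\<Sum>c\<in>D. (b c)^2) \<ge> (b c0)^2"
        using c0 assms(2) by (intro member_le_sum) auto
      moreover have "(b c0)^2 > 0" using c0 by simp
      ultimately show ?thesis by linarith
    qed
    ultimately show ?thesis by (intro disjI2 exI[of _ "\<lambda>c. - b c"]) simp
  qed
next
  case (insert e E)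
  from insert.IH[of b as] show ?case
  proof
    assume "\<exists>\<mu>. (\<forall>e\<in>E. \<mu> e \<ge> 0) \<and> (\<forall>c\<in>D. b c = (\<Sum>e\<in>E. \<mu> e * as e c))"
    then obtain \<mu> where mu: "\<forall>e\<in>E. \<mu> e \<ge> 0" "\<forall>c\<in>D. b c = (\<Sum>e\<in>E. \<mu> e * as e c)" by blast
    have "\<forall>e'\<in>insert e E. (\<mu>(e := 0)) e' \<ge> 0" using mu by auto
    moreover have "\<forall>c\<in>D. b c = (\<Sum>e'\<in>insert e E. (\<mu>(e := 0)) e' * as e' c)"
    proof
      fix c assume "c \<in> D"
      have "(\<Sum>e'\<in>insert e E. (\<mu>(e := 0)) e' * as e' c) = (\<Sum>e'\<in>E. (\<mu>(e := 0)) e' * as e' c)"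
        using insert.hyps by simp
      also have "\<dots> = (\<Sum>e'\<in>E. \<mu> e' * as e' c)"
        using insert.hyps by (intro sum.cong) auto
      finally show "b c = (\<Sum>e'\<in>insert e E. (\<mu>(e := 0)) e' * as e' c)" using mu \<open>c \<in> D\<close> by simp
    qed
    ultimately show ?case by blast
  next
    assume "\<exists>y. (\<forall>e\<in>E. ip D y (as e) \<ge> 0) \<and> ip D y b < 0"
    then obtain y where y: "\<forall>e\<in>E. ip D y (as e) \<ge> 0" "ip D y b < 0" by blast
    show ?case
    proof (cases "ip D y (as e) \<ge> 0")
      case True
      then show ?thesis using y by auto
    next
      case False
      define t where "t = ip D y (as e)"
      have t: "t < 0" using False t_def by simp
      define as' where "as' = (\<lambda>k c. t * as k c - ip D y (as k) * as e c)"
      define b' where "b' = (\<lambda>c. t * b c - ip D y b * as e c)"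
      from insert.IH[of b' as'] show ?thesis
      proof
        assume "\<exists>\<mu>. (\<forall>e\<in>E. \<mu> e \<ge> 0) \<and> (\<forall>c\<in>D. b' c = (\<Sum>e\<in>E. \<mu> e * as' e c))"
        then obtain \<mu> where mu: "\<forall>e\<in>E. \<mu> e \<ge> 0" "\<forall>c\<in>D. b' c = (\<Sum>e\<in>E. \<mu> e * as' e c)" by blast
        define r where "r = (ip D y b - (\<Sum>k\<in>E. \<mu> k * ip D y (as k))) / t"
        have "(\<Sum>k\<in>E. \<mu> k * ip D y (as k)) \<ge> 0"
          using mu y by (intro sum_nonneg) auto
        hence "ip D y b - (\<Sum>k\<in>E. \<mu> k * ip D y (as k)) < 0" using y by linarith
        hence r0: "r \<ge> 0" unfolding r_def using t by (simp add: divide_nonpos_neg)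
        have "\<forall>e'\<in>insert e E. (\<mu>(e := r)) e' \<ge> 0" using mu r0 by auto
        moreover have "\<forall>c\<in>D. b c = (\<Sum>e'\<in>insert e E. (\<mu>(e := r)) e' * as e' c)"
        proof
          fix c assume c: "c \<in> D"
          have "(\<Sum>e'\<in>insert e E. (\<mu>(e := r)) e' * as e' c) = r * as e c + (\<Sum>e'\<in>E. (\<mu>(e := r)) e' * as e' c)"
            using insert.hyps by simp
          also have "(\<Sum>e'\<in>E. (\<mu>(e := r)) e' * as e' c) = (\<Sum>e'\<in>E. \<mu> e' * as e' c)"
            using insert.hyps by (intro sum.cong) auto
          finally have eq: "(\<Sum>e'\<in>insert e E. (\<mu>(e := r)) e' * as e' c) = r * as e c + (\<Sum>e'\<in>E. \<mu> e' * as e' c)" .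
          have "t * b c - ip D y b * as e c = (\<Sum>k\<in>E. \<mu> k * (t * as k c - ip D y (as k) * as e c))"
            using mu(2) c unfolding b'_def as'_def by simp
          also have "\<dots> = t * (\<Sum>k\<in>E. \<mu> k * as k c) - (\<Sum>k\<in>E. \<mu> k * ip D y (as k)) * as e c"
            by (simp add: algebra_simps sum_subtractf sum_distrib_left sum_distrib_right)
          finally have "t * b c = t * (\<Sum>k\<in>E. \<mu> k * as k c) + (ip D y b - (\<Sum>k\<in>E. \<mu> k * ip D y (as k))) * as e c"
            by (simp add: algebra_simps)
          also have "(ip D y b - (\<Sum>k\<in>E. \<mu> k * ip D y (as k))) = t * r"
            unfolding r_def using t by simp
          finally have "t * b c = t * ((\<Sum>k\<in>E. \<mu> k * as k c) + r * as e c)"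
            by (simp add: algebra_simps)
          hence "b c = (\<Sum>k\<in>E. \<mu> k * as k c) + r * as e c" using t by simp
          thus "b c = (\<Sum>e'\<in>insert e E. (\<mu>(e := r)) e' * as e' c)" using eq by simp
        qed
        ultimately show ?thesis by blast
      next
        assume "\<exists>z. (\<forall>e\<in>E. ip D z (as' e) \<ge> 0) \<and> ip D z b' < 0"
        then obtain z where z: "\<forall>e\<in>E. ip D z (as' e) \<ge> 0" "ip D z b' < 0" by blast
        define y' where "y' = (\<lambda>c. t * z c - ip D z (as e) * y c)"
        have ipk: "ip D y' (as k) = ip D z (as' k)" for k
          unfolding y'_def as'_def ip_lin_left ip_lin_right by (simp add: algebra_simps)
        have "ip D y' (as e) = 0"
          unfolding y'_def ip_lin_left t_def by simp
        moreover have "ip D y' b = ip D z b'"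
          unfolding y'_def b'_def ip_lin_left ip_lin_right by (simp add: algebra_simps)
        ultimately show ?thesis using z ipk
          by (intro disjI2 exI[of _ y']) auto
      qed
    qed
  qed
qed


lemma ip_Plus: "finite A \<Longrightarrow> finite B \<Longrightarrow> ip (A <+> B) y a = (\<Sum>i\<in>A. y (Inl i) * a (Inl i)) + (\<Sum>l\<in>B. y (Inr l) * a (Inr l))"
  unfolding ip_def by (simp add: sum.Plus comp_def)

lemma ip_add_sum: "finite S \<Longrightarrow> ip D y (\<lambda>c. f c + (\<Sum>e\<in>S. g e c)) = ip D y f + (\<Sum>e\<in>S. ip D y (g e))"
  unfolding ip_def by (simp add: distrib_left sum.distrib sum_distrib_left sum.swap[of _ D])

lemma certificate:
  fixes n K :: nat and kappa :: "nat \<Rightarrow> nat" and s :: "nat \<Rightarrow> nat \<Rightarrow> nat" and lam :: "nat \<Rightarrow> real"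
  assumes sij: "\<And>i j. i \<in> {1..K} \<Longrightarrow> j \<in> {1..kappa i} \<Longrightarrow> s i j \<in> {1..n}"
    and kap: "\<And>i. i \<in> {1..K} \<Longrightarrow> kappa i \<ge> 1"
    and lampos: "\<And>i. i \<in> {1..K} \<Longrightarrow> lam i > 0"
    and lamsum: "(\<Sum>i=1..K. lam i) = 1"
    and K1: "K \<ge> 1"
    and no_pos_sol: "\<not> (\<exists>\<alpha> :: nat \<Rightarrow> nat \<Rightarrow> real.
           (\<forall>i\<in>{1..K}. \<forall>j\<in>{1..kappa i}. \<alpha> i j > 0) \<and>
           (\<forall>i\<in>{1..K}. (\<Sum>j=1..kappa i. \<alpha> i j) = lam i) \<and>
           (\<forall>l\<in>{1..n}. (\<Sum>i=1..K. \<Sum>j=1..kappa i. \<alpha> i j * (if l = s i j then 1 else 0)) = 1 / real n))"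
  shows "\<exists>w mm l0. (\<Sum>l=1..n. w l) = 0 \<and> (\<forall>i\<in>{1..K}. \<forall>j\<in>{1..kappa i}. mm i \<le> w (s i j))
     \<and> (\<Sum>i=1..K. lam i * mm i) \<ge> 0 \<and> l0 \<in> {1..n} \<and> (w l0 :: real) > 0"
proof -
  have n1: "n \<ge> 1" using sij[of 1 1] K1 kap[of 1] by auto
  define Ed where "Ed = Sigma {1..K} (\<lambda>i. {1..kappa i})"
  define D :: "(nat + nat) set" where "D = {0..K} <+> {1..n}"
  define E :: "(nat \<times> nat + nat) set" where "E = Ed <+> {0, 1}"
  define col :: "nat \<times> nat \<Rightarrow> nat + nat \<Rightarrow> real" where
    "col e c = (if c = Inl (fst e) then 1 else 0) + (if c = Inr (s (fst e) (snd e)) then 1 else 0)" for e c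
  define sc where "sc c = (if c = Inl 0 then 1 else 0) + (\<Sum>e\<in>Ed. col e c)" for c
  define tc :: "nat + nat \<Rightarrow> real" where
    "tc c = (case c of Inl i \<Rightarrow> if i = 0 then 0 else - lam i | Inr l \<Rightarrow> - 1 / real n)" for c
  define as :: "nat \<times> nat + nat \<Rightarrow> nat + nat \<Rightarrow> real" where "as = case_sum col (\<lambda>k. if k = 0 then sc else tc)"
  define b :: "nat + nat \<Rightarrow> real" where "b c = (if c = Inl 0 then 1 else 0)" for c
  have inDl: "Inl i \<in> D" if "i \<le> K" for i unfolding D_def using that by auto
  have inDr: "Inr l \<in> D" if "l \<in> {1..n}" for l unfolding D_def using that by auto
  have finEd: "finite Ed" unfolding Ed_def by auto
  have finD: "finite D" unfolding D_def by auto
  have finE: "finite E" unfolding E_def using finEd by auto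
  have sumE: "(\<Sum>e\<in>E. f e) = (\<Sum>e\<in>Ed. f (Inl e)) + f (Inr 0) + f (Inr 1)" for f :: "_ \<Rightarrow> real"
    unfolding E_def using finEd by (simp add: sum.Plus comp_def)
  have sumEd: "(\<Sum>e\<in>Ed. g e) = (\<Sum>i=1..K. \<Sum>j=1..kappa i. g (i,j))" for g :: "_ \<Rightarrow> real"
    unfolding Ed_def by (subst sum.Sigma) auto
  have colInl: "(\<Sum>e\<in>Ed. f e * col e (Inl i')) = (\<Sum>j=1..kappa i'. f (i',j))" if i': "i' \<in> {1..K}" for f i'
  proof -
    have "(\<Sum>e\<in>Ed. f e * col e (Inl i')) = (\<Sum>i=1..K. if i' = i then (\<Sum>j=1..kappa i. f (i,j)) else 0)"
      unfolding sumEd col_def by (intro sum.cong) auto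
    also have "\<dots> = (\<Sum>j=1..kappa i'. f (i',j))" using i' by (simp add: sum.delta)
    finally show ?thesis .
  qed
  have colInl0: "(\<Sum>e\<in>Ed. f e * col e (Inl 0)) = 0" for f
    unfolding sumEd col_def by (intro sum.neutral ballI) auto
  have colInr: "(\<Sum>e\<in>Ed. f e * col e (Inr l)) = (\<Sum>i=1..K. \<Sum>j=1..kappa i. f (i,j) * (if l = s i j then 1 else 0))" for f l
    unfolding sumEd col_def by simp
  from farkas[OF finE finD, of b as] show ?thesis
  proof
    assume "\<exists>\<mu>. (\<forall>e\<in>E. \<mu> e \<ge> 0) \<and> (\<forall>c\<in>D. b c = (\<Sum>e\<in>E. \<mu> e * as e c))"
    then obtain \<mu> where mu0: "\<forall>e\<in>E. \<mu> e \<ge> 0" and mueq: "\<forall>c\<in>D. b c = (\<Sum>e\<in>E. \<mu> e * as e c)" by blast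
    define \<sigma> where "\<sigma> = \<mu> (Inr 0)"
    define \<tau> where "\<tau> = \<mu> (Inr 1)"
    have expand: "b c = (\<Sum>e\<in>Ed. \<mu> (Inl e) * col e c) + \<sigma> * sc c + \<tau> * tc c" if "c \<in> D" for c
      using mueq that unfolding sumE as_def \<sigma>_def \<tau>_def by simp
    have "1 = \<sigma>"
      using expand[OF inDl[of 0]] colInl0[of "\<lambda>e. \<mu> (Inl e)"] colInl0[of "\<lambda>_. 1"]
      unfolding b_def sc_def tc_def by simp
    hence expand2: "0 = (\<Sum>e\<in>Ed. (\<mu> (Inl e) + 1) * col e c) + \<tau> * tc c" if "c \<in> D" "c \<noteq> Inl 0" for c
      using expand[OF that(1)] that(2) unfolding b_def sc_def by (simp add: sum.distrib algebra_simps)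
    have rowi: "(\<Sum>j=1..kappa i. \<mu> (Inl (i,j)) + 1) = \<tau> * lam i" if i: "i \<in> {1..K}" for i
      using expand2[OF inDl[of i]] colInl[OF i, of "\<lambda>e. \<mu> (Inl e) + 1"] i unfolding tc_def by auto
    have rowl: "(\<Sum>i=1..K. \<Sum>j=1..kappa i. (\<mu> (Inl (i,j)) + 1) * (if l = s i j then 1 else 0)) = \<tau> / real n"
      if l: "l \<in> {1..n}" for l
      using expand2[OF inDr[OF l]] colInr[of "\<lambda>e. \<mu> (Inl e) + 1" l] l unfolding tc_def by auto
    have mupos: "\<mu> (Inl (i,j)) + 1 > 0" if "i \<in> {1..K}" "j \<in> {1..kappa i}" for i j
    proof -
      have "Inl (i,j) \<in> E" unfolding E_def Ed_def using that by auto
      thus ?thesis using mu0 by fastforce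
    qed
    have "(\<Sum>j=1..kappa 1. \<mu> (Inl (1,j)) + 1) > 0"
      using kap[of 1] K1 mupos[of 1] by (intro sum_pos) auto
    hence tpos: "\<tau> > 0" using rowi[of 1] K1 lampos[of 1] by (simp add: zero_less_mult_iff)
    define \<alpha> where "\<alpha> i j = (\<mu> (Inl (i,j)) + 1) / \<tau>" for i j
    have "(\<forall>i\<in>{1..K}. \<forall>j\<in>{1..kappa i}. \<alpha> i j > 0)"
      unfolding \<alpha>_def using mupos tpos by simp
    moreover have "(\<forall>i\<in>{1..K}. (\<Sum>j=1..kappa i. \<alpha> i j) = lam i)"
    proof
      fix i assume i: "i \<in> {1..K}"
      have "(\<Sum>j=1..kappa i. \<alpha> i j) = (\<Sum>j=1..kappa i. \<mu> (Inl (i,j)) + 1) / \<tau>"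
        unfolding \<alpha>_def by (simp add: sum_divide_distrib)
      thus "(\<Sum>j=1..kappa i. \<alpha> i j) = lam i" using rowi[OF i] tpos by simp
    qed
    moreover have "(\<forall>l\<in>{1..n}. (\<Sum>i=1..K. \<Sum>j=1..kappa i. \<alpha> i j * (if l = s i j then 1 else 0)) = 1 / real n)"
    proof
      fix l assume l: "l \<in> {1..n}"
      have "(\<Sum>i=1..K. \<Sum>j=1..kappa i. \<alpha> i j * (if l = s i j then 1 else 0))
          = (\<Sum>i=1..K. \<Sum>j=1..kappa i. (\<mu> (Inl (i,j)) + 1) * (if l = s i j then 1 else 0)) / \<tau>"
        unfolding \<alpha>_def by (simp add: sum_divide_distrib)
      thus "(\<Sum>i=1..K. \<Sum>j=1..kappa i. \<alpha> i j * (if l = s i j then 1 else 0)) = 1 / real n"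
        using rowl[OF l] tpos by simp
    qed
    ultimately show ?thesis using no_pos_sol by blast
  next
    assume "\<exists>y. (\<forall>e\<in>E. ip D y (as e) \<ge> 0) \<and> ip D y b < 0"
    then obtain y where y0: "\<forall>e\<in>E. ip D y (as e) \<ge> 0" and yb: "ip D y b < 0" by blast
    define u where "u i = y (Inl i)" for i
    define v where "v l = y (Inr l)" for l
    have ipD: "ip D y a = (\<Sum>i=0..K. u i * a (Inl i)) + (\<Sum>l=1..n. v l * a (Inr l))" for a
      unfolding D_def u_def v_def by (simp add: ip_Plus)
    have ys: "u 0 < 0" using yb unfolding ipD b_def by (simp add: if_distrib sum.delta cong: if_cong)
    have ipcol: "ip D y (col (i,j)) = u i + v (s i j)" if "i \<in> {1..K}" "j \<in> {1..kappa i}" for i j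
    proof -
      have "(\<Sum>i'=0..K. u i' * col (i,j) (Inl i')) = (\<Sum>i'=0..K. if i' = i then u i' else 0)"
        by (intro sum.cong) (auto simp: col_def)
      also have "\<dots> = u i" using that by (simp add: sum.delta)
      finally have 1: "(\<Sum>i'=0..K. u i' * col (i,j) (Inl i')) = u i" .
      have "(\<Sum>l=1..n. v l * col (i,j) (Inr l)) = (\<Sum>l=1..n. if l = s i j then v l else 0)"
        by (intro sum.cong) (auto simp: col_def)
      also have "\<dots> = v (s i j)" using sij[OF that] by (simp add: sum.delta)
      finally show ?thesis unfolding ipD using 1 by simp
    qed
    have c1: "u i + v (s i j) \<ge> 0" if "i \<in> {1..K}" "j \<in> {1..kappa i}" for i j
    proof -
      have "Inl (i,j) \<in> E" unfolding E_def Ed_def using that by auto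
      hence "ip D y (as (Inl (i,j))) \<ge> 0" using y0 by blast
      thus ?thesis using ipcol[OF that] unfolding as_def by simp
    qed
    have "ip D y (as (Inr 0)) \<ge> 0" using y0 unfolding E_def by auto
    hence "ip D y sc \<ge> 0" unfolding as_def by simp
    moreover have "ip D y sc = u 0 + (\<Sum>e\<in>Ed. ip D y (col e))"
      unfolding sc_def ip_add_sum[OF finEd] by (simp add: ipD sum.delta if_distrib cong: if_cong)
    moreover have "(\<Sum>e\<in>Ed. ip D y (col e)) = (\<Sum>i=1..K. \<Sum>j=1..kappa i. u i + v (s i j))"
      unfolding sumEd using ipcol by (intro sum.cong refl) auto
    ultimately have c2: "(\<Sum>i=1..K. \<Sum>j=1..kappa i. u i + v (s i j)) > 0" using ys by linarith
    have "ip D y (as (Inr 1)) \<ge> 0" using y0 unfolding E_def by auto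
    hence "ip D y tc \<ge> 0" unfolding as_def by simp
    moreover have "ip D y tc = - (\<Sum>i=1..K. lam i * u i) - (\<Sum>l=1..n. v l) / real n"
    proof -
      have "(\<Sum>i=0..K. u i * tc (Inl i)) = (\<Sum>i=1..K. u i * tc (Inl i))"
        by (subst sum.atLeast_Suc_atMost) (auto simp: tc_def)
      also have "\<dots> = - (\<Sum>i=1..K. lam i * u i)"
        unfolding tc_def by (simp add: sum_negf[symmetric] algebra_simps)
      finally show ?thesis unfolding ipD tc_def by (simp add: sum_divide_distrib[symmetric] sum_negf)
    qed
    ultimately have c3: "(\<Sum>i=1..K. lam i * u i) + (\<Sum>l=1..n. v l) / real n \<le> 0" by linarith
    define vb where "vb = (\<Sum>l=1..n. v l) / real n"
    define w where "w l = v l - vb" for l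
    define mm where "mm i = - u i - vb" for i
    have wsum: "(\<Sum>l=1..n. w l) = 0"
      unfolding w_def vb_def using n1 by (simp add: sum_subtractf)
    have wmm: "\<forall>i\<in>{1..K}. \<forall>j\<in>{1..kappa i}. mm i \<le> w (s i j)"
      unfolding w_def mm_def using c1 by fastforce
    have mmsum: "(\<Sum>i=1..K. lam i * mm i) \<ge> 0"
    proof -
      have "(\<Sum>i=1..K. lam i * mm i) = - (\<Sum>i=1..K. lam i * u i) - (\<Sum>i=1..K. lam i) * vb"
        unfolding mm_def by (simp add: algebra_simps sum_subtractf sum_negf sum_distrib_right sum_distrib_left)
      thus ?thesis using c3 lamsum unfolding vb_def by simp
    qed
    have "\<exists>l0\<in>{1..n}. w l0 > 0"
    proof (rule ccontr)
      assume "\<not> (\<exists>l0\<in>{1..n}. w l0 > 0)"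
      hence wle: "\<forall>l\<in>{1..n}. - w l \<ge> 0" by auto
      have "(\<Sum>l=1..n. - w l) = 0" using wsum by (simp add: sum_negf)
      hence "\<forall>l\<in>{1..n}. - w l = 0" using sum_nonneg_eq_0_iff[of "{1..n}" "\<lambda>l. - w l"] wle by auto
      hence vc: "\<forall>l\<in>{1..n}. v l = vb" unfolding w_def by auto
      have ge: "\<forall>i\<in>{1..K}. lam i * (u i + vb) \<ge> 0"
      proof
        fix i assume i: "i \<in> {1..K}"
        have "1 \<in> {1..kappa i}" using kap[OF i] by simp
        hence "u i + vb \<ge> 0" using c1[OF i] vc sij[OF i] by fastforce
        thus "lam i * (u i + vb) \<ge> 0" using lampos[OF i] by simp
      qed
      have c3': "(\<Sum>i=1..K. lam i * u i) + vb \<le> 0" using c3 unfolding vb_def .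
      have "(\<Sum>i=1..K. lam i * (u i + vb)) = (\<Sum>i=1..K. lam i * u i) + (\<Sum>i=1..K. lam i) * vb"
        by (simp only: distrib_left sum.distrib sum_distrib_right)
      also have "\<dots> = (\<Sum>i=1..K. lam i * u i) + vb" by (simp only: lamsum mult_1)
      finally have le0: "(\<Sum>i=1..K. lam i * (u i + vb)) \<le> 0" using c3' by linarith
      have ge0: "(\<Sum>i=1..K. lam i * (u i + vb)) \<ge> 0" using ge by (intro sum_nonneg) blast
      have sum0: "(\<Sum>i=1..K. lam i * (u i + vb)) = 0" using le0 ge0 by linarith
      have ui: "u i + vb = 0" if i: "i \<in> {1..K}" for i
      proof -
        have "lam i * (u i + vb) = 0"
          using sum_nonneg_eq_0_iff[of "{1..K}" "\<lambda>i. lam i * (u i + vb)"] ge sum0 i by blast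
        thus ?thesis using lampos[OF i] by simp
      qed
      have "(\<Sum>i=1..K. \<Sum>j=1..kappa i. u i + v (s i j)) = 0"
      proof (intro sum.neutral ballI)
        fix i j assume i: "i \<in> {1..K}" and j: "j \<in> {1..kappa i}"
        have "v (s i j) = vb" using vc sij[OF i j] by blast
        thus "u i + v (s i j) = 0" using ui[OF i] by simp
      qed
      thus False using c2 by simp
    qed
    then obtain l0 where "l0 \<in> {1..n}" "w l0 > 0" by blast
    thus ?thesis using wsum wmm mmsum by blast
  qed
qed


definition gfun :: "nat \<Rightarrow> (nat \<Rightarrow> real) \<Rightarrow> (nat \<Rightarrow> nat) \<Rightarrow> real" where
  "gfun n w x = (\<Sum>l=1..n. w l * real (x l))"

primrec Gk ::
  "nat \<Rightarrow> nat \<Rightarrow> (nat \<Rightarrow> nat) \<Rightarrow> (nat \<Rightarrow> nat \<Rightarrow> nat) \<Rightarrow> (nat \<Rightarrow> real) \<Rightarrow>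
   ((nat \<Rightarrow> nat) \<Rightarrow> nat \<Rightarrow> nat \<Rightarrow> real) \<Rightarrow> (nat \<Rightarrow> real) \<Rightarrow> nat \<Rightarrow> (nat \<Rightarrow> nat) \<Rightarrow> real" where
  "Gk n K kappa s lam p w 0 x = gfun n w x"
| "Gk n K kappa s lam p w (Suc m) x =
     (\<Sum>i=1..K. \<Sum>j=1..kappa i. lam i * p x i j *
        (let y = add_item x (s i j) in
         if shape n y = (\<lambda>_. 0) then 0 else Gk n K kappa s lam p w m y))"

lemma add_item_configs: "x \<in> configs n \<Longrightarrow> l \<in> {1..n} \<Longrightarrow> add_item x l \<in> configs n"
  unfolding configs_def add_item_def by auto

lemma gfun_shape0:
  assumes "shape n y = (\<lambda>_. 0)" "(\<Sum>l=1..n. w l) = 0"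
  shows "gfun n w y = 0"
proof -
  have "\<And>l. l \<in> {1..n} \<Longrightarrow> real (y l) = load_mean n y"
  proof -
    fix l assume "l \<in> {1..n}"
    hence "shape n y l = real (y l) - load_mean n y" unfolding shape_def by simp
    thus "real (y l) = load_mean n y" using assms(1) by simp
  qed
  hence "gfun n w y = (\<Sum>l=1..n. w l * load_mean n y)" unfolding gfun_def
    by (intro sum.cong) auto
  also have "\<dots> = (\<Sum>l=1..n. w l) * load_mean n y" by (simp add: sum_distrib_right)
  finally show ?thesis using assms(2) by simp
qed

lemma gfun_add:
  assumes "l \<in> {1..n}"
  shows "gfun n w (add_item x l) = gfun n w x + w l"
proof -
  have "gfun n w (add_item x l) = (\<Sum>l'=1..n. w l' * real (x l') + (if l' = l then w l else 0))"
    unfolding gfun_def add_item_def by (intro sum.cong) (auto simp: algebra_simps)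
  also have "\<dots> = gfun n w x + w l" unfolding gfun_def using assms
    by (simp add: sum.distrib)
  finally show ?thesis .
qed

lemma div_helper:
  fixes w B S :: real and m :: nat
  assumes a: "w \<le> (w + B) * real (Suc m) * S" and l0: "w > 0" and B0: "B \<ge> 0"
  shows "w / (w + B) / real (Suc m) \<le> S"
proof -
  have "S * ((w + B) * real (Suc m)) = (w + B) * real (Suc m) * S"
    by (rule mult.commute)
  hence h: "w \<le> S * ((w + B) * real (Suc m))" using a by linarith
  have pos: "(w + B) * real (Suc m) > 0" using l0 B0 by simp
  have "w / ((w + B) * real (Suc m)) \<le> S"
    using h by (subst pos_divide_le_eq[OF pos])
  thus ?thesis by simp
qed

context
  fixes n K :: nat and kappa :: "nat \<Rightarrow> nat" and s :: "nat \<Rightarrow> nat \<Rightarrow> nat"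
    and lam :: "nat \<Rightarrow> real" and p :: "(nat \<Rightarrow> nat) \<Rightarrow> nat \<Rightarrow> nat \<Rightarrow> real"
    and w mm :: "nat \<Rightarrow> real"
  assumes model: "storage_model n K kappa s lam"
    and policy: "routing_policy n K kappa p"
    and wsum: "(\<Sum>l=1..n. w l) = 0"
    and wmm: "\<And>i j. i \<in> {1..K} \<Longrightarrow> j \<in> {1..kappa i} \<Longrightarrow> mm i \<le> w (s i j)"
    and mmsum: "(\<Sum>i=1..K. lam i * mm i) \<ge> 0"
begin

lemma sij: "i \<in> {1..K} \<Longrightarrow> j \<in> {1..kappa i} \<Longrightarrow> s i j \<in> {1..n}"
  using model unfolding storage_model_def by blast

lemma lam_pos: "i \<in> {1..K} \<Longrightarrow> lam i > 0"
  using model unfolding storage_model_def by blast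

lemma lam_sum: "(\<Sum>i=1..K. lam i) = 1"
  using model unfolding storage_model_def by blast

lemma p_nonneg: "x \<in> configs n \<Longrightarrow> i \<in> {1..K} \<Longrightarrow> j \<in> {1..kappa i} \<Longrightarrow> p x i j \<ge> 0"
  using policy unfolding routing_policy_def by blast

lemma p_sum: "x \<in> configs n \<Longrightarrow> i \<in> {1..K} \<Longrightarrow> (\<Sum>j=1..kappa i. p x i j) = 1"
  using policy unfolding routing_policy_def by blast

lemma lp_nonneg: "x \<in> configs n \<Longrightarrow> i \<in> {1..K} \<Longrightarrow> j \<in> {1..kappa i} \<Longrightarrow> lam i * p x i j \<ge> 0"
  using p_nonneg lam_pos by (simp add: less_imp_le)

lemma survival_nonneg: "x \<in> configs n \<Longrightarrow> survival n K kappa s lam p m x \<ge> 0"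
proof (induction m arbitrary: x)
  case 0 then show ?case by simp
next
  case (Suc m)
  show ?case unfolding survival.simps Let_def
  proof (intro sum_nonneg)
    fix i j assume i: "i \<in> {1..K}" and j: "j \<in> {1..kappa i}"
    have y: "add_item x (s i j) \<in> configs n" using add_item_configs sij i j Suc.prems by blast
    show "0 \<le> lam i * p x i j * (if shape n (add_item x (s i j)) = (\<lambda>_. 0) then 0
          else survival n K kappa s lam p m (add_item x (s i j)))"
    proof (cases "shape n (add_item x (s i j)) = (\<lambda>_. 0)")
      case True then show ?thesis by simp
    next
      case False then show ?thesis
        using mult_nonneg_nonneg[OF lp_nonneg[OF Suc.prems i j] Suc.IH[OF y]] by simp
    qed
  qed
qed

lemma Gk_ge: "x \<in> configs n \<Longrightarrow> Gk n K kappa s lam p w m x \<ge> gfun n w x"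
proof (induction m arbitrary: x)
  case 0 then show ?case by simp
next
  case (Suc m)
  have "(\<Sum>i=1..K. lam i * gfun n w x) = (\<Sum>i=1..K. lam i) * gfun n w x"
    by (rule sum_distrib_right[symmetric])
  also have "\<dots> = gfun n w x" by (simp only: lam_sum mult_1)
  finally have "gfun n w x = (\<Sum>i=1..K. lam i * gfun n w x)" by (rule sym)
  also have "\<dots> \<le> (\<Sum>i=1..K. lam i * (gfun n w x + mm i))"
    using mmsum by (simp add: distrib_left sum.distrib)
  also have "\<dots> = (\<Sum>i=1..K. \<Sum>j=1..kappa i. lam i * p x i j * (gfun n w x + mm i))"
  proof (intro sum.cong refl)
    fix i assume i: "i \<in> {1..K}"
    have "(\<Sum>j=1..kappa i. lam i * p x i j * (gfun n w x + mm i))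
        = (\<Sum>j=1..kappa i. p x i j) * (lam i * (gfun n w x + mm i))"
      by (subst sum_distrib_right) (simp add: mult_ac)
    thus "lam i * (gfun n w x + mm i) = (\<Sum>j=1..kappa i. lam i * p x i j * (gfun n w x + mm i))"
      using p_sum[OF Suc.prems i] by (simp only: mult_1)
  qed
  also have "\<dots> \<le> (\<Sum>i=1..K. \<Sum>j=1..kappa i. lam i * p x i j * gfun n w (add_item x (s i j)))"
    using Suc.prems sij wmm lp_nonneg gfun_add
    by (intro sum_mono mult_left_mono) auto
  also have "\<dots> \<le> Gk n K kappa s lam p w (Suc m) x"
    unfolding Gk.simps Let_def
  proof (intro sum_mono mult_left_mono)
    fix i j assume i: "i \<in> {1..K}" and j: "j \<in> {1..kappa i}"
    let ?y = "add_item x (s i j)"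
    have y: "?y \<in> configs n" using add_item_configs sij i j Suc.prems by blast
    show "gfun n w ?y \<le> (if shape n ?y = (\<lambda>_. 0) then 0 else Gk n K kappa s lam p w m ?y)"
      using gfun_shape0[OF _ wsum, of ?y] Suc.IH[OF y] by auto
    show "0 \<le> lam i * p x i j" using lp_nonneg Suc.prems i j by blast
  qed
  finally show ?case .
qed

lemma Gk_le:
  assumes B: "\<And>l. l \<in> {1..n} \<Longrightarrow> w l \<le> B"
  shows "x \<in> configs n \<Longrightarrow> Gk n K kappa s lam p w m x \<le> (gfun n w x + B * real m) * survival n K kappa s lam p m x"
proof (induction m arbitrary: x)
  case 0 then show ?case by simp
next
  case (Suc m)
  have "Gk n K kappa s lam p w (Suc m) x \<le>
     (\<Sum>i=1..K. \<Sum>j=1..kappa i. lam i * p x i j *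
        (if shape n (add_item x (s i j)) = (\<lambda>_. 0) then 0 else
          (gfun n w x + B * real (Suc m)) * survival n K kappa s lam p m (add_item x (s i j))))"
    unfolding Gk.simps Let_def
  proof (intro sum_mono mult_left_mono)
    fix i j assume i: "i \<in> {1..K}" and j: "j \<in> {1..kappa i}"
    let ?y = "add_item x (s i j)"
    have y: "?y \<in> configs n" using add_item_configs sij i j Suc.prems by blast
    have g: "gfun n w ?y = gfun n w x + w (s i j)" using gfun_add sij i j by blast
    have "w (s i j) \<le> B" using B sij i j by blast
    hence "gfun n w ?y + B * real m \<le> gfun n w x + B * real (Suc m)" using g by (simp add: algebra_simps)
    hence "(gfun n w ?y + B * real m) * survival n K kappa s lam p m ?y
        \<le> (gfun n w x + B * real (Suc m)) * survival n K kappa s lam p m ?y"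
      using survival_nonneg[OF y] by (intro mult_right_mono) auto
    thus "(if shape n ?y = (\<lambda>_. 0) then 0 else Gk n K kappa s lam p w m ?y)
        \<le> (if shape n ?y = (\<lambda>_. 0) then 0 else (gfun n w x + B * real (Suc m)) * survival n K kappa s lam p m ?y)"
      using Suc.IH[OF y] by auto
    show "0 \<le> lam i * p x i j" using lp_nonneg Suc.prems i j by blast
  qed
  also have "\<dots> = (gfun n w x + B * real (Suc m)) * survival n K kappa s lam p (Suc m) x"
    unfolding survival.simps Let_def
    by (simp add: sum_distrib_left algebra_simps if_distrib cong: if_cong)
  finally show ?case .
qed

lemma not_pr_of_w:
  assumes l0: "l0 \<in> {1..n}" "w l0 > 0"
  shows "\<not> positive_recurrent n K kappa s lam p"
proof
  assume pr: "positive_recurrent n K kappa s lam p"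
  define y0 :: "nat \<Rightarrow> nat" where "y0 = (\<lambda>l. if l = l0 then 1 else 0)"
  have y0: "y0 \<in> configs n" using l0 unfolding y0_def configs_def by auto
  have g0: "gfun n w y0 = w l0" unfolding gfun_def y0_def using l0(1)
    by (simp add: if_distrib cong: if_cong)
  define B where "B = (\<Sum>l=1..n. \<bar>w l\<bar>)"
  have B: "\<And>l. l \<in> {1..n} \<Longrightarrow> w l \<le> B"
  proof -
    fix l assume "l \<in> {1..n}"
    hence "\<bar>w l\<bar> \<le> B" unfolding B_def by (intro member_le_sum) auto
    thus "w l \<le> B" by simp
  qed
  have B0: "B \<ge> 0" unfolding B_def by (simp add: sum_nonneg)
  let ?S = "\<lambda>m. survival n K kappa s lam p m y0"
  define c where "c = w l0 / (w l0 + B)"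
  have cpos: "c > 0" unfolding c_def using l0 B0 by simp
  have lower: "c / real (Suc m) \<le> ?S m" for m
  proof -
    have "w l0 \<le> (w l0 + B * real m) * ?S m"
      using Gk_ge[OF y0, of m] Gk_le[OF B y0, of m] g0 by simp
    hence "w l0 \<le> (w l0 + B) * real (Suc m) * ?S m"
    proof -
      assume a: "w l0 \<le> (w l0 + B * real m) * ?S m"
      have "w l0 + B * real m \<le> (w l0 + B) * real (Suc m)"
        using l0 B0 by (simp add: algebra_simps)
      hence "(w l0 + B * real m) * ?S m \<le> (w l0 + B) * real (Suc m) * ?S m"
        using survival_nonneg[OF y0] by (intro mult_right_mono) auto
      with a show ?thesis by linarith
    qed
    thus ?thesis unfolding c_def by (rule div_helper[OF _ l0(2) B0])
  qed
  have fin: "expected_return_time n K kappa s lam p y0 < \<infinity>" using pr y0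
    unfolding positive_recurrent_def by blast
  have nt: "(\<Sum>m. ennreal (?S m)) \<noteq> top"
    using fin unfolding expected_return_time_def by simp
  have "summable ?S"
    by (rule summable_suminf_not_top[OF survival_nonneg[OF y0] nt])
  moreover have "norm (c / real (Suc m)) \<le> ?S m" for m
  proof -
    have "c / real (Suc m) \<ge> 0" using cpos by simp
    hence "norm (c / real (Suc m)) = c / real (Suc m)" using cpos by simp
    thus ?thesis using lower[of m] by simp
  qed
  ultimately have "summable (\<lambda>m. c / real (Suc m))"
    by (rule summable_comparison_test')
  hence "summable (\<lambda>m. (1/c) * (c / real (Suc m)))"
    by (rule summable_mult)
  moreover have "(\<lambda>m. (1/c) * (c / real (Suc m))) = (\<lambda>m. inverse (real (Suc m)))"
    using cpos by (simp add: fun_eq_iff divide_inverse)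
  ultimately have "summable (\<lambda>m. inverse (real (Suc m)))" by simp
  hence "summable (\<lambda>m. inverse (real m))"
    by (rule iffD1[OF summable_Suc_iff])
  thus False using not_summable_harmonic by blast
qed

end

theorem theorem2p3:
  fixes n K :: nat and kappa :: "nat \<Rightarrow> nat" and s :: "nat \<Rightarrow> nat \<Rightarrow> nat"
    and lam :: "nat \<Rightarrow> real" and p :: "(nat \<Rightarrow> nat) \<Rightarrow> nat \<Rightarrow> nat \<Rightarrow> real"
  assumes model: "storage_model n K kappa s lam"
    and no_pos_sol: "\<not> (\<exists>\<alpha> :: nat \<Rightarrow> nat \<Rightarrow> real.
           (\<forall>i\<in>{1..K}. \<forall>j\<in>{1..kappa i}. \<alpha> i j > 0) \<and>
           (\<forall>i\<in>{1..K}. (\<Sum>j=1..kappa i. \<alpha> i j) = lam i) \<and>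
           (\<forall>l\<in>{1..n}. (\<Sum>i=1..K. \<Sum>j=1..kappa i. \<alpha> i j * (if l = s i j then 1 else 0)) = 1 / real n))"
    and policy: "routing_policy n K kappa p"
  shows "\<not> positive_recurrent n K kappa s lam p"
proof -
  have sij: "\<And>i j. i \<in> {1..K} \<Longrightarrow> j \<in> {1..kappa i} \<Longrightarrow> s i j \<in> {1..n}"
    using model unfolding storage_model_def by blast
  have kap: "\<And>i. i \<in> {1..K} \<Longrightarrow> kappa i \<ge> 1"
    using model unfolding storage_model_def by blast
  have lampos: "\<And>i. i \<in> {1..K} \<Longrightarrow> lam i > 0"
    using model unfolding storage_model_def by blast
  have lamsum: "(\<Sum>i=1..K. lam i) = 1"
    using model unfolding storage_model_def by blast
  have K1: "K \<ge> 1"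
    using model unfolding storage_model_def by blast
  obtain w mm l0 where wsum: "(\<Sum>l=1..n. w l) = 0"
    and wmm: "\<forall>i\<in>{1..K}. \<forall>j\<in>{1..kappa i}. mm i \<le> w (s i j)"
    and mmsum: "(\<Sum>i=1..K. lam i * mm i) \<ge> 0" and l0: "l0 \<in> {1..n}" "(w l0 :: real) > 0"
    using certificate[OF sij kap lampos lamsum K1 no_pos_sol] by blast
  have wmm': "\<And>i j. i \<in> {1..K} \<Longrightarrow> j \<in> {1..kappa i} \<Longrightarrow> mm i \<le> w (s i j)"
    using wmm by blast
  show ?thesis by (rule not_pr_of_w[OF model policy wsum wmm' mmsum l0])
qed

end
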